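(* Assume the following statement holds: for every base $b>2$, every integer $n$ with $1<n<b$, and every symmetric $(n,b)$-palintiple with carries $c_k,\ldots,c_0$, one has $c_j\equiv 0 \pmod{n-1}$ for all $0\le j\le k$. Then, for integers $b>2$ and $1<n<b$, an $(n,b)$-palintiple is symmetric if and only if $n+1$ divides $b$.
   Context: Let $b>2$ be an integer base and write $(d_k,d_{k-1},\ldots,d_0)_b=\sum_{j=0}^k d_j b^j$ with $0\le d_j<b$. A natural number $p=(d_k,\ldots,d_0)_b$ with $d_k\neq 0$ and $d_0\neq 0$ that is not a base-$b$ palindrome is an $(n,b)$-palintiple if $(d_k,\ldots,d_0)_b=n\,(d_0,d_1,\ldots,d_k)_b$ for an integer $n$ with $1<n<b$. Its carries $c_0,\ldots,c_{k+1}$ are the carries arising in the base-$b$ multiplication of $(d_0,\ldots,d_k)_b$ by $n$: $c_0=0$ and $n d_{k-j}+c_j=d_j+b\,c_{j+1}$ for $0\le j\le k$ (so $c_{k+1}=0$). The palintiple is symmetric if $c_j=c_{k-j}$ for all $0\le j\le k$, shifted-symmetric if $c_j=c_{k-j+1}$ for all $0\le j\le k$, and asymmetric if it is neither. *)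

theory Defs
  imports "HOL-Number_Theory.Cong"
begin

definition digit :: "nat \<Rightarrow> nat \<Rightarrow> nat \<Rightarrow> nat" where
  "digit b p j = p div b ^ j mod b"

definition revnum :: "nat \<Rightarrow> nat \<Rightarrow> nat \<Rightarrow> nat" where
  "revnum b k p = (\<Sum>j\<le>k. digit b p (k - j) * b ^ j)"

definition palintiple :: "nat \<Rightarrow> nat \<Rightarrow> nat \<Rightarrow> nat \<Rightarrow> bool" where
  "palintiple n b k p \<longleftrightarrow>
     1 < n \<and> n < b \<and> b ^ k \<le> p \<and> p < b ^ (Suc k) \<and>
     digit b p 0 \<noteq> 0 \<and>
     (\<exists>j\<le>k. digit b p j \<noteq> digit b p (k - j)) \<and>
     p = n * revnum b k p"

text \<open>Carries of the base-b multiplication of (d_0,...,d_k)_b by n: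
  c_0 = 0, n d_{k-j} + c_j = d_j + b c_{j+1}.\<close>
fun carry :: "nat \<Rightarrow> nat \<Rightarrow> nat \<Rightarrow> nat \<Rightarrow> nat \<Rightarrow> nat" where
  "carry n b k p 0 = 0"
| "carry n b k p (Suc j) = (n * digit b p (k - j) + carry n b k p j) div b"

definition symmetric_pal :: "nat \<Rightarrow> nat \<Rightarrow> nat \<Rightarrow> nat \<Rightarrow> bool" where
  "symmetric_pal n b k p \<longleftrightarrow> (\<forall>j\<le>k. carry n b k p j = carry n b k p (k - j))"

definition shifted_symmetric_pal :: "nat \<Rightarrow> nat \<Rightarrow> nat \<Rightarrow> nat \<Rightarrow> bool" where
  "shifted_symmetric_pal n b k p \<longleftrightarrow> (\<forall>j\<le>k. carry n b k p j = carry n b k p (k - j + 1))"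

end

theory Submission
  imports Defs
begin

definition Qs :: "nat \<Rightarrow> nat \<Rightarrow> nat \<Rightarrow> nat \<Rightarrow> nat" where
  "Qs b k p j = (\<Sum>i<j. digit b p (k-i) * b^i)"

lemma revsplit:
  assumes "j \<le> Suc k"
  shows "\<exists>R. revnum b k p = Qs b k p j + b^j * R"
proof -
  let ?f = "\<lambda>i. digit b p (k-i) * b^i"
  have "revnum b k p = sum ?f {0..<Suc k}"
    unfolding revnum_def by (simp add: atLeast0LessThan lessThan_Suc_atMost)
  also have "\<dots> = sum ?f {0..<j} + sum ?f {j..<Suc k}"
    using assms by (metis sum.atLeastLessThan_concat zero_le)
  also have "sum ?f {j..<Suc k} = b^j * (\<Sum>i\<in>{j..<Suc k}. digit b p (k-i) * b^(i-j))"
    unfolding sum_distrib_left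
  proof (rule sum.cong)
    fix i assume "i \<in> {j..<Suc k}"
    then have "j + (i - j) = i" by auto
    then have "b^j * b^(i-j) = b^i" by (metis power_add)
    then show "?f i = b^j * (digit b p (k-i) * b^(i-j))" by (metis mult.left_commute)
  qed simp
  finally show ?thesis unfolding Qs_def by (auto simp: atLeast0LessThan)
qed

lemma carry_lt:
  assumes "0 < n" "0 < b"
  shows "carry n b k p j < n"
proof (induction j)
  case 0 then show ?case using assms by simp
next
  case (Suc j)
  have "digit b p (k - j) \<le> b - 1" using assms unfolding digit_def
    using mod_less_divisor[OF assms(2), of "p div b ^ (k - j)"] by linarith
  then have "n * digit b p (k - j) \<le> n * (b - 1)" by simp
  moreover have "n * (b - 1) + n = n * b" using assms by (simp add: algebra_simps)
  ultimately have "n * digit b p (k - j) + carry n b k p j < n * b" using Suc by linarith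
  then show ?case by (simp add: less_mult_imp_div_less)
qed

lemma step:
  assumes b: "0 < b" and pn: "p = n * revnum b k p"
    and Lj: "n * Qs b k p j = p mod b^j + b^j * carry n b k p j" and jk: "j \<le> k"
  shows "(carry n b k p j + n * digit b p (k-j)) mod b = digit b p j"
    and "n * Qs b k p (Suc j) = p mod b^j + b^j * (carry n b k p j + n * digit b p (k-j))"
proof -
  let ?s = "carry n b k p j + n * digit b p (k-j)"
  have Qsuc: "Qs b k p (Suc j) = Qs b k p j + digit b p (k-j) * b^j" by (simp add: Qs_def)
  show e1: "n * Qs b k p (Suc j) = p mod b^j + b^j * ?s" using Lj Qsuc by (simp add: algebra_simps)
  obtain R where R: "revnum b k p = Qs b k p (Suc j) + b^(Suc j) * R"
    using revsplit[of "Suc j" k b p] jk by auto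
  have "p = n * Qs b k p (Suc j) + b^(Suc j) * (n*R)" using pn R by (simp add: algebra_simps)
  then have "p mod b^(Suc j) = (n * Qs b k p (Suc j)) mod b^(Suc j)" by (metis mod_mult_self2)
  then have e2: "p mod (b^j * b) = (p mod b^j + b^j * ?s) mod (b^j * b)" using e1 by (simp add: mult.commute)
  have bj: "0 < b^j" using b by simp
  have "p mod b^j < b^j" using bj by simp
  then have m1: "(p mod b^j + b^j * ?s) mod (b^j*b) = b^j * (?s mod b) + p mod b^j"
    using bj by (simp add: mod_mult2_eq)
  have m2: "p mod (b^j*b) = b^j * digit b p j + p mod b^j"
    by (simp add: mod_mult2_eq digit_def div_mult2_eq)
  from e2 m1 m2 have "b^j * (?s mod b) = b^j * digit b p j" by linarith
  then show "?s mod b = digit b p j" using bj by (metis mult_left_cancel not_gr0)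
qed

lemma mainL:
  assumes b: "0 < b" and pn: "p = n * revnum b k p"
  shows "j \<le> Suc k \<Longrightarrow> n * Qs b k p j = p mod b^j + b^j * carry n b k p j"
proof (induction j)
  case 0 then show ?case by (simp add: Qs_def)
next
  case (Suc j)
  then have jk: "j \<le> k" by simp
  have IH: "n * Qs b k p j = p mod b^j + b^j * carry n b k p j" using Suc by simp
  note st = step[OF b pn IH jk]
  let ?s = "carry n b k p j + n * digit b p (k-j)"
  have s: "?s = digit b p j + b * carry n b k p (Suc j)"
    using st(1) div_mult_mod_eq[of "carry n b k p j + n * digit b p (k-j)" b] by (simp add: mult.commute add.commute)
  have "p mod (b^j * b) = b^j * digit b p j + p mod b^j"
    by (simp add: mod_mult2_eq digit_def)
  then have m2: "p mod b^(Suc j) = b^j * digit b p j + p mod b^j"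
    by (simp only: power_Suc2)
  have "n * Qs b k p (Suc j) = p mod b^j + b^j * (digit b p j + b * carry n b k p (Suc j))"
    using st(2) s by simp
  also have "\<dots> = (b^j * digit b p j + p mod b^j) + b^Suc j * carry n b k p (Suc j)"
    by (simp add: distrib_left power_Suc2 mult.assoc)
  finally show ?case using m2 by simp
qed

lemma digitA:
  assumes b: "0 < b" and pn: "p = n * revnum b k p" and jk: "j \<le> k"
  shows "n * digit b p (k-j) + carry n b k p j = digit b p j + b * carry n b k p (Suc j)"
proof -
  have IH: "n * Qs b k p j = p mod b^j + b^j * carry n b k p j" using mainL[OF b pn] jk by simp
  note st = step[OF b pn IH jk]
  show ?thesis using st(1) div_mult_mod_eq[of "carry n b k p j + n * digit b p (k-j)" b] by (simp add: mult.commute add.commute)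
qed

lemma carry_last:
  assumes b: "0 < b" and pn: "p = n * revnum b k p" and pl: "p < b^Suc k"
  shows "carry n b k p (Suc k) = 0"
proof -
  have L: "n * Qs b k p (Suc k) = p mod b^Suc k + b^Suc k * carry n b k p (Suc k)"
    using mainL[OF b pn] by simp
  have "revnum b k p = Qs b k p (Suc k)"
    unfolding revnum_def Qs_def by (simp add: lessThan_Suc_atMost)
  then have "p = p + b^Suc k * carry n b k p (Suc k)" using L pn pl by simp
  then show ?thesis using b by simp
qed

theorem corollary1:
  assumes hyp: "\<forall>b n k p. 2 < b \<longrightarrow> 1 < n \<longrightarrow> n < b \<longrightarrow>
                  palintiple n b k p \<longrightarrow> symmetric_pal n b k p \<longrightarrow>
                  (\<forall>j\<le>k. [carry n b k p j = 0] (mod (n - 1)))"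
    and "2 < (b::nat)" and "1 < (n::nat)" and "n < b"
    and "palintiple n b k p"
  shows "symmetric_pal n b k p \<longleftrightarrow> (n + 1) dvd b"
proof -
  have b: "0 < b" using assms by simp
  have pn: "p = n * revnum b k p" and pl: "p < b^Suc k" and d0: "digit b p 0 \<noteq> 0"
    and np: "\<exists>j\<le>k. digit b p j \<noteq> digit b p (k - j)"
    using assms(5) unfolding palintiple_def by auto
  have k1: "1 \<le> k" using np by (cases k) auto
  note A = digitA[OF b pn]
  have dlt: "\<And>i. digit b p i < b" using b by (simp add: digit_def)
  show ?thesis
  proof
    assume sym: "symmetric_pal n b k p"
    have ck: "carry n b k p k = 0" using sym unfolding symmetric_pal_def
      by (metis carry.simps(1) diff_self_eq_0 order_refl)
    have ck1: "carry n b k p (Suc k) = 0" using carry_last[OF b pn pl] .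
    have dk: "digit b p k = n * digit b p 0" using A[of k] ck ck1 by simp
    have A0: "n * digit b p k = digit b p 0 + b * carry n b k p 1" using A[of 0] by simp
    have "[carry n b k p 1 = 0] (mod (n - 1))"
      using hyp[rule_format, OF assms(2,3,4,5) sym k1] .
    then obtain m where m: "carry n b k p 1 = (n - 1) * m" by (auto simp: cong_0_iff)
    have "int (n - 1) * (int (n + 1) * int (digit b p 0)) = int (n - 1) * (int b * int m)"
      proof -
      have i1: "int n * (int n * int (digit b p 0)) = int (digit b p 0) + int b * (int n - 1) * int m"
        using arg_cong[OF A0, of int] dk m assms(3) by (simp add: of_nat_diff)
      show ?thesis using i1 assms(3) by (simp add: of_nat_diff algebra_simps)
    qed
    then have "(n - 1) * ((n + 1) * digit b p 0) = (n - 1) * (b * m)" by (simp only: of_nat_mult[symmetric] of_nat_eq_iff)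
    then have e: "(n + 1) * digit b p 0 = b * m" using assms(3) by simp
    have m0: "m \<noteq> 0"
    proof
      assume "m = 0"
      then have "(n + 1) * digit b p 0 = 0" using e by simp
      then show False using d0 by simp
    qed
    have "n * digit b p 0 < b" using dk dlt[of k] by simp
    have "m = 1"
    proof (rule ccontr)
      assume "m \<noteq> 1"
      then have "2 \<le> m" using m0 by simp
      then have "2 * b \<le> (n + 1) * digit b p 0" using e by simp
      moreover have "n * digit b p 0 < b" using dk dlt[of k] by simp
      moreover have "digit b p 0 \<le> n * digit b p 0" using assms(3) by simp
      ultimately show False by (simp add: algebra_simps)
    qed
    then show "(n + 1) dvd b" using e by (metis dvd_triv_left mult.right_neutral)
  next
    assume dv: "(n + 1) dvd b"
    show "symmetric_pal n b k p" unfolding symmetric_pal_def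
    proof (intro allI impI)
      fix j assume jk: "j \<le> k"
      have A1: "n * digit b p (k-j) + carry n b k p j = digit b p j + b * carry n b k p (Suc j)"
        using A jk by simp
      have A2: "n * digit b p j + carry n b k p (k-j) = digit b p (k-j) + b * carry n b k p (Suc (k-j))"
        using A[of "k-j"] jk by simp
      obtain t where t: "b = (n+1) * t" using dv by auto
      have "int (carry n b k p j) - int (carry n b k p (k-j)) =
            int (n+1) * (int t * (int (carry n b k p (Suc j)) - int (carry n b k p (Suc (k-j))))
              - (int (digit b p (k-j)) - int (digit b p j)))"
        using arg_cong[OF A1, of int] arg_cong[OF A2, of int] t by (simp add: algebra_simps)
      then have "int (n+1) dvd (int (carry n b k p j) - int (carry n b k p (k-j)))" by simp
      moreover have "carry n b k p j < n" "carry n b k p (k-j) < n" using carry_lt assms b by auto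
      ultimately show "carry n b k p j = carry n b k p (k - j)"
      proof -
        assume dvd: "int (n+1) dvd (int (carry n b k p j) - int (carry n b k p (k-j)))"
          and l1: "carry n b k p j < n" and l2: "carry n b k p (k-j) < n"
        obtain r where r: "int (carry n b k p j) - int (carry n b k p (k-j)) = int (n+1) * r"
          using dvd by auto
        have "r = 0"
        proof (rule ccontr)
          assume "r \<noteq> 0"
          then have "\<bar>int (n+1) * r\<bar> \<ge> int (n+1)" by (simp add: abs_mult)
          then show False using r l1 l2 by linarith
        qed
        then show ?thesis using r by simp
      qed
    qed
  qed
qed

end
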